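(* Let $S$ be a $0$-left cancellative semigroup and let $\sigma$ be a maximal string in $S$. Then either $\sigma$ is open, or $\sigma=\delta_r=\{t\in S:t\mid r\}$ for some $r\in S$ with $rS=\{0\}$.
   Context: $S$ has zero $0$; $0$-left cancellative: $st=sr\neq0\Rightarrow t=r$. $\tilde S=S\cup\{1\}$, $1$ an adjoined identity; $s\mid t$ means $t\in s\tilde S$. A string is a nonempty $\sigma\subseteq S$ with $0\notin\sigma$, closed under divisors ($s\mid t\in\sigma\Rightarrow s\in\sigma$), and such that any $s_1,s_2\in\sigma$ have a common multiple $s\in\sigma$ ($s_1\mid s$, $s_2\mid s$). Maximal: not properly contained in another string. The interior of a string $\sigma$ is $\{s\in S:\exists p\in S,\ sp\in\sigma\}$; $\sigma$ is open if it equals its interior. *)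

theory Defs
  imports Main
begin

text \<open>A semigroup with zero is modelled by the sort {semigroup_mult, mult_zero}
  (associative multiplication, 0 * a = 0 = a * 0).\<close>

definition zero_left_cancellative :: "('a::{semigroup_mult,mult_zero}) itself \<Rightarrow> bool" where
  "zero_left_cancellative _ \<longleftrightarrow>
     (\<forall>s t r :: 'a. s * t = s * r \<and> s * t \<noteq> 0 \<longrightarrow> t = r)"

text \<open>s divides t: t \<in> s S~, where S~ = S with an adjoined identity.\<close>
definition sdvd :: "'a::{semigroup_mult,mult_zero} \<Rightarrow> 'a \<Rightarrow> bool" where
  "sdvd s t \<longleftrightarrow> t = s \<or> (\<exists>u. t = s * u)"

definition is_string :: "('a::{semigroup_mult,mult_zero}) set \<Rightarrow> bool" where
  "is_string \<sigma> \<longleftrightarrow> \<sigma> \<noteq> {} \<and> 0 \<notin> \<sigma>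
     \<and> (\<forall>s t. sdvd s t \<and> t \<in> \<sigma> \<longrightarrow> s \<in> \<sigma>)
     \<and> (\<forall>s1\<in>\<sigma>. \<forall>s2\<in>\<sigma>. \<exists>s\<in>\<sigma>. sdvd s1 s \<and> sdvd s2 s)"

definition maximal_string :: "('a::{semigroup_mult,mult_zero}) set \<Rightarrow> bool" where
  "maximal_string \<sigma> \<longleftrightarrow> is_string \<sigma> \<and> (\<forall>\<tau>. is_string \<tau> \<and> \<sigma> \<subseteq> \<tau> \<longrightarrow> \<tau> = \<sigma>)"

definition string_interior :: "('a::{semigroup_mult,mult_zero}) set \<Rightarrow> 'a set" where
  "string_interior \<sigma> = {s. \<exists>p. s * p \<in> \<sigma>}"

definition open_string :: "('a::{semigroup_mult,mult_zero}) set \<Rightarrow> bool" where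
  "open_string \<sigma> \<longleftrightarrow> \<sigma> = string_interior \<sigma>"

end

theory Submission
  imports Defs
begin

lemma sdvd_trans:
  fixes a b c :: "'a::{semigroup_mult,mult_zero}"
  shows "sdvd a b \<Longrightarrow> sdvd b c \<Longrightarrow> sdvd a c"
  unfolding sdvd_def by (metis mult.assoc)

lemma delta_string:
  fixes q :: "'a::{semigroup_mult,mult_zero}"
  assumes "q \<noteq> 0"
  shows "is_string {t. sdvd t q}"
  unfolding is_string_def
proof (intro conjI)
  show "{t. sdvd t q} \<noteq> {}" by (auto simp: sdvd_def)
  show "0 \<notin> {t. sdvd t q}" using assms by (auto simp: sdvd_def)
  show "\<forall>s t. sdvd s t \<and> t \<in> {t. sdvd t q} \<longrightarrow> s \<in> {t. sdvd t q}"
    using sdvd_trans by blast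
  show "\<forall>s1\<in>{t. sdvd t q}. \<forall>s2\<in>{t. sdvd t q}. \<exists>s\<in>{t. sdvd t q}. sdvd s1 s \<and> sdvd s2 s"
    by (auto simp: sdvd_def)
qed

theorem proposition11p3:
  fixes \<sigma> :: "('a::{semigroup_mult,mult_zero}) set"
  assumes "zero_left_cancellative TYPE('a)"
    and "maximal_string \<sigma>"
  shows "open_string \<sigma> \<or> (\<exists>r. \<sigma> = {t. sdvd t r} \<and> (\<forall>p. r * p = 0))"
proof (cases "open_string \<sigma>")
  case True then show ?thesis by simp
next
  case False
  have str: "is_string \<sigma>" using assms(2) by (simp add: maximal_string_def)
  have parts: "0 \<notin> \<sigma>" "\<forall>s t. sdvd s t \<and> t \<in> \<sigma> \<longrightarrow> s \<in> \<sigma>"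
     "\<forall>s1\<in>\<sigma>. \<forall>s2\<in>\<sigma>. \<exists>s\<in>\<sigma>. sdvd s1 s \<and> sdvd s2 s"
    using str by (simp_all add: is_string_def)
  have dc: "\<And>s t. sdvd s t \<Longrightarrow> t \<in> \<sigma> \<Longrightarrow> s \<in> \<sigma>" using parts(2) by blast
  have cm: "\<And>a b. a \<in> \<sigma> \<Longrightarrow> b \<in> \<sigma> \<Longrightarrow> \<exists>s\<in>\<sigma>. sdvd a s \<and> sdvd b s"
    using parts(3) by blast
  have int_sub: "string_interior \<sigma> \<subseteq> \<sigma>"
    unfolding string_interior_def using dc by (auto simp: sdvd_def)
  then obtain r where r: "r \<in> \<sigma>" "\<And>p. r * p \<notin> \<sigma>"
    using False unfolding open_string_def string_interior_def by blast
  have eq: "\<sigma> = {t. sdvd t r}"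
  proof
    show "\<sigma> \<subseteq> {t. sdvd t r}"
    proof
      fix t assume t: "t \<in> \<sigma>"
      obtain s where s: "s \<in> \<sigma>" "sdvd r s" "sdvd t s" using cm[OF r(1) t] by blast
      have "s = r" using s r(2) by (auto simp: sdvd_def)
      then show "t \<in> {t. sdvd t r}" using s by simp
    qed
    show "{t. sdvd t r} \<subseteq> \<sigma>" using dc r(1) by blast
  qed
  have "\<forall>p. r * p = 0"
  proof (rule ccontr)
    assume "\<not> (\<forall>p. r * p = 0)"
    then obtain p where p: "r * p \<noteq> 0" by blast
    have "is_string {t. sdvd t (r * p)}" by (rule delta_string[OF p])
    moreover have "\<sigma> \<subseteq> {t. sdvd t (r * p)}"
      using eq sdvd_trans[of _ r "r * p"] by (auto simp: sdvd_def)
    ultimately have "{t. sdvd t (r * p)} = \<sigma>" using assms(2) unfolding maximal_string_def by blast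
    then have "r * p \<in> \<sigma>" by (auto simp: sdvd_def)
    then show False using r(2) by blast
  qed
  then show ?thesis using eq by blast
qed

end
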